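(* Let $n\ge1$ and let $x_1\ge x_2\ge\dots\ge x_n$ be positive integers with $\sum_{i\in[n]}2^{-x_i}\ge 1$. Then there exists a family $\mathcal L=\{L_i\}_{i\in[n]}$ of sets of positive integers with $|L_i|=x_i$ for every $i\in[n]$ such that the discrete interval hypergraph $H_n$ does not admit a unique-maximum coloring from $\mathcal L$. (One such family is $L_i=\{c : x_1+1-x_i\le c\le x_1\}$.)
   Context: For $n\ge1$, $[n]=\{1,\dots,n\}$ and for $s\le t$ in $[n]$, $[s,t]=\{i: s\le i\le t\}$. The discrete interval hypergraph $H_n$ has vertex set $[n]$ and hyperedges all $[s,t]$ with $s\le t$, $s,t\in[n]$. A coloring $C\colon[n]\to\mathbb Z_{>0}$ is a unique-maximum coloring if in every hyperedge the maximum color is attained by exactly one vertex. $H_n$ admits a unique-maximum coloring from $\mathcal L$ if there is a unique-maximum coloring $C$ with $C(i)\in L_i$ for all $i$. *)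

theory Defs
  imports Complex_Main
begin

text \<open>Unique-maximum coloring of the discrete interval hypergraph H_n on vertex set {1..n}:
  colors are positive integers, and in every interval [s,t] (1 <= s <= t <= n)
  the maximum color is attained by exactly one vertex.\<close>
definition unique_max_coloring :: "nat \<Rightarrow> (nat \<Rightarrow> nat) \<Rightarrow> bool" where
  "unique_max_coloring n C \<longleftrightarrow>
     (\<forall>i\<in>{1..n}. C i > 0) \<and>
     (\<forall>s t. 1 \<le> s \<and> s \<le> t \<and> t \<le> n \<longrightarrow>
        card {i \<in> {s..t}. C i = Max (C ` {s..t})} = 1)"

definition admits_um_coloring_from :: "nat \<Rightarrow> (nat \<Rightarrow> nat set) \<Rightarrow> bool" where
  "admits_um_coloring_from n L \<longleftrightarrow>
     (\<exists>C. unique_max_coloring n C \<and> (\<forall>i\<in>{1..n}. C i \<in> L i))"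

end

theory Submission
  imports Defs
begin

definition um :: "(nat \<Rightarrow> nat) \<Rightarrow> nat \<Rightarrow> nat \<Rightarrow> bool" where
  "um C s t \<longleftrightarrow> (\<forall>a b. s \<le> a \<longrightarrow> a \<le> b \<longrightarrow> b \<le> t \<longrightarrow>
      (\<exists>m\<in>{a..b}. \<forall>j\<in>{a..b}. j \<noteq> m \<longrightarrow> C j < C m))"

lemma um_sub: "um C s t \<Longrightarrow> s \<le> s' \<Longrightarrow> t' \<le> t \<Longrightarrow> um C s' t'"
  unfolding um_def by (meson order_trans)


lemma key:
  assumes "um C s t" "s \<le> t"
  shows "(\<Sum>i=s..t. (2::nat)^(min r (Min (C`{i..t})))) + 2^(min r (Min (C`{s..t})))
           \<le> 2^(Max (C`{s..t}) + 1)"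
  using assms
proof (induction "t - s" arbitrary: s t r rule: less_induct)
  case less
  obtain m where m: "m \<in> {s..t}" "\<forall>j\<in>{s..t}. j \<noteq> m \<longrightarrow> C j < C m"
    using less.prems unfolding um_def by blast
  define c where "c = C m"
  have Maxc: "Max (C`{s..t}) = c"
    using m unfolding c_def by (intro Max_eqI) (auto intro: less_imp_le)
  define \<rho> where "\<rho> = Min (C`{m..t})"
  define r' where "r' = min r \<rho>"
  have \<rho>c: "\<rho> \<le> c" unfolding \<rho>_def c_def using m by (intro Min_le) auto
  define f where "f = (\<lambda>i. (2::nat)^(min r (Min (C`{i..t}))))"
  have Minsplit: "Min (C`{i..t}) = min (Min (C`{i..m-1})) \<rho>" if "s \<le> i" "i < m" for i
  proof -
    have "{i..t} = {i..m-1} \<union> {m..t}" using that m by auto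
    hence "C`{i..t} = C`{i..m-1} \<union> C`{m..t}" by auto
    thus ?thesis unfolding \<rho>_def using that m by (simp add: Min_Un)
  qed
  have sumsplit: "(\<Sum>i=s..t. f i) = (\<Sum>i\<in>{s..<m}. f i) + f m + (\<Sum>i=Suc m..t. f i)"
  proof -
    have "{s..t} = {s..<m} \<union> ({m} \<union> {Suc m..t})" using m by auto
    hence "(\<Sum>i=s..t. f i) = sum f ({s..<m} \<union> ({m} \<union> {Suc m..t}))" by simp
    also have "\<dots> = (\<Sum>i\<in>{s..<m}. f i) + (\<Sum>i\<in>{m} \<union> {Suc m..t}. f i)"
      by (rule sum.union_disjoint) auto
    also have "(\<Sum>i\<in>{m} \<union> {Suc m..t}. f i) = f m + (\<Sum>i=Suc m..t. f i)"
      by (subst sum.union_disjoint) auto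
    finally show ?thesis by simp
  qed
  have fm: "f m = 2^r'" unfolding f_def r'_def \<rho>_def by simp
  have A: "(\<Sum>i\<in>{s..<m}. f i) + 2^(min r (Min (C`{s..t}))) \<le> (2::nat)^c"
  proof (cases "s = m")
    case True
    hence "min r (Min (C`{s..t})) \<le> c" using \<rho>c unfolding \<rho>_def by simp
    hence "(2::nat)^(min r (Min (C`{s..t}))) \<le> 2^c" by (simp add: power_increasing)
    thus ?thesis using True by simp
  next
    case False
    hence sm: "s < m" using m by auto
    have eqs: "(\<Sum>i\<in>{s..<m}. f i) = (\<Sum>i=s..m-1. (2::nat)^(min r' (Min (C`{i..m-1}))))"
    proof -
      have "{s..<m} = {s..m-1}" using sm by auto
      moreover have "f i = (2::nat)^(min r' (Min (C`{i..m-1})))" if "i \<in> {s..m-1}" for i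
        proof -
        have "i < m" "s \<le> i" using that sm by auto
        hence "Min (C`{i..t}) = min (Min (C`{i..m-1})) \<rho>" using Minsplit by blast
        thus ?thesis unfolding f_def r'_def by (simp add: min.commute min.left_commute)
      qed
      ultimately show ?thesis by simp
    qed
    have IH: "(\<Sum>i=s..m-1. (2::nat)^(min r' (Min (C`{i..m-1})))) + 2^(min r' (Min (C`{s..m-1})))
           \<le> 2^(Max (C`{s..m-1}) + 1)"
      using less.hyps[of "m-1" s r'] sm m less.prems um_sub[of C s t s "m-1"] by auto
    have ML0: "Max (C`{s..m-1}) < c" using m sm unfolding c_def by auto
    hence "(2::nat)^(Max (C`{s..m-1}) + 1) \<le> 2^c" by (intro power_increasing) auto
    moreover have "min r (Min (C`{s..t})) = min r' (Min (C`{s..m-1}))"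
      using Minsplit[of s] sm unfolding r'_def by (simp add: min.commute min.left_commute)
    ultimately show ?thesis using IH eqs by simp
  qed
  have B: "(\<Sum>i=Suc m..t. f i) + 2^r' \<le> (2::nat)^c"
  proof (cases "m = t")
    case True
    have "r' \<le> c" using \<rho>c unfolding r'_def by simp
    hence "(2::nat)^r' \<le> 2^c" by (simp add: power_increasing)
    thus ?thesis using True by simp
  next
    case False
    hence mt: "m < t" using m by auto
    have IH: "(\<Sum>i=Suc m..t. f i) + 2^(min r (Min (C`{Suc m..t}))) \<le> 2^(Max (C`{Suc m..t}) + 1)"
      unfolding f_def
      using less.hyps[of t "Suc m" r] mt m less.prems um_sub[of C s t "Suc m" t] by auto
    have MR0: "Max (C`{Suc m..t}) < c" using m mt unfolding c_def by auto
    hence "(2::nat)^(Max (C`{Suc m..t}) + 1) \<le> 2^c" by (intro power_increasing) auto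
    moreover have "\<rho> = Min (C`{Suc m..t})"
    proof -
      have "{m..t} = insert m {Suc m..t}" using mt by auto
      hence "C`{m..t} = insert (C m) (C`{Suc m..t})" by auto
      moreover have "Min (C`{Suc m..t}) < C m" using m mt by (subst Min_less_iff) auto
      ultimately show ?thesis unfolding \<rho>_def using mt by (simp add: Min_insert)
    qed
    ultimately show ?thesis using IH unfolding r'_def by simp
  qed
  have "(\<Sum>i=s..t. f i) + 2^(min r (Min (C`{s..t}))) \<le> 2^c + 2^c"
    using A B sumsplit fm by simp
  thus ?case unfolding f_def Maxc by simp
qed

theorem theorem2p6:
  fixes n :: nat and x :: "nat \<Rightarrow> nat"
  assumes "n \<ge> 1"
    and "\<And>i j. 1 \<le> i \<Longrightarrow> i \<le> j \<Longrightarrow> j \<le> n \<Longrightarrow> x j \<le> x i"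
    and "\<And>i. i \<in> {1..n} \<Longrightarrow> x i > 0"
    and "(\<Sum>i=1..n. (1/2::real) ^ x i) \<ge> 1"
  shows "\<exists>L :: nat \<Rightarrow> nat set.
           (\<forall>i\<in>{1..n}. card (L i) = x i \<and> (\<forall>c\<in>L i. c > 0)) \<and>
           \<not> admits_um_coloring_from n L"
proof -
  define K where "K = x 1"
  define L where "L = (\<lambda>i. {K + 1 - x i..K})"
  have xK: "x i \<le> K" if "i \<in> {1..n}" for i using assms(2)[of 1 i] that unfolding K_def by auto
  have cardL: "\<forall>i\<in>{1..n}. card (L i) = x i \<and> (\<forall>c\<in>L i. c > 0)"
  proof
    fix i assume i: "i \<in> {1..n}"
    have "x i > 0" using assms(3) i .
    thus "card (L i) = x i \<and> (\<forall>c\<in>L i. c > 0)" using xK[OF i] unfolding L_def by auto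
  qed
  have "\<not> admits_um_coloring_from n L"
  proof
    assume "admits_um_coloring_from n L"
    then obtain C where C: "unique_max_coloring n C" "\<forall>i\<in>{1..n}. C i \<in> L i"
      unfolding admits_um_coloring_from_def by blast
    have um: "um C 1 n" unfolding um_def
    proof (intro allI impI)
      fix a b assume ab: "1 \<le> a" "a \<le> b" "b \<le> n"
      hence "card {i \<in> {a..b}. C i = Max (C ` {a..b})} = 1"
        using C(1) unfolding unique_max_coloring_def by blast
      then obtain m where m: "{i \<in> {a..b}. C i = Max (C ` {a..b})} = {m}"
        by (auto simp: card_Suc_eq)
      hence mi: "m \<in> {a..b}" "C m = Max (C ` {a..b})" by auto
      show "\<exists>m\<in>{a..b}. \<forall>j\<in>{a..b}. j \<noteq> m \<longrightarrow> C j < C m"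
      proof (intro bexI[OF _ mi(1)] ballI impI)
        fix j assume j: "j \<in> {a..b}" "j \<noteq> m"
        have "C j \<le> Max (C ` {a..b})" using j by (intro Max_ge) auto
        moreover have "C j \<noteq> Max (C ` {a..b})" using m j by auto
        ultimately show "C j < C m" using mi by simp
      qed
    qed
    define g where "g = (\<lambda>i. min K (Min (C`{i..n})))"
    have k: "(\<Sum>i=1..n. (2::nat)^(g i)) + 2^(min K (Min (C`{1..n}))) \<le> 2^(Max (C`{1..n}) + 1)"
      unfolding g_def using key[OF um assms(1), of K] .
    have "Max (C`{1..n}) \<le> K" using C(2) assms(1) unfolding L_def by auto
    hence "(2::nat)^(Max (C`{1..n}) + 1) \<le> 2^(K+1)" by (intro power_increasing) auto
    moreover have "(0::nat) < 2^(min K (Min (C`{1..n})))" by simp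
    ultimately have S: "(\<Sum>i=1..n. (2::nat)^(g i)) < 2^(K+1)" using k by linarith
    have bnd: "K + 1 \<le> x i + g i" if i: "i \<in> {1..n}" for i
    proof -
      have "Min (C`{i..n}) \<in> C`{i..n}" using i by (intro Min_in) auto
      then obtain j where j: "j \<in> {i..n}" "Min (C`{i..n}) = C j" by auto
      have "C j \<ge> K + 1 - x j" using C(2) j i unfolding L_def by auto
      moreover have "x j \<le> x i" using assms(2)[of i j] i j by auto
      moreover have "x i > 0" using assms(3) i .
      ultimately show ?thesis unfolding g_def using j by auto
    qed
    have "(\<Sum>i=1..n. (1/2::real) ^ x i) \<le> (\<Sum>i=1..n. real (2^(g i)) / 2^(K+1))"
    proof (rule sum_mono)
      fix i assume i: "i \<in> {1..n}"
      have "(2::nat)^(K+1) \<le> 2^(x i + g i)" using bnd[OF i] by (intro power_increasing) auto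
      hence "(2::real)^(K+1) \<le> 2^(x i) * 2^(g i)"
        by (metis of_nat_le_iff of_nat_numeral of_nat_power power_add)
      thus "(1/2::real) ^ x i \<le> real (2^(g i)) / 2^(K+1)"
        by (simp add: power_one_over field_simps)
    qed
    also have "\<dots> = real (\<Sum>i=1..n. (2::nat)^(g i)) / 2^(K+1)"
      by (simp add: sum_divide_distrib)
    also have "\<dots> < 1"
    proof -
      have "real (\<Sum>i=1..n. (2::nat)^(g i)) < real ((2::nat)^(K+1))"
        using S by (simp only: of_nat_less_iff)
      hence "real (\<Sum>i=1..n. (2::nat)^(g i)) < (2::real)^(K+1)" by simp
      thus ?thesis by (simp add: divide_less_eq)
    qed
    finally show False using assms(4) by simp
  qed
  thus ?thesis using cardL by blast
qed

end
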